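(* Let $G$ be a connected simple graph without bridges whose edge set is identified with $[d+1]$, let $B_1,\dots,B_n$ be the bases (spanning trees) of its graphic matroid, all of cardinality $k$, and let $P=\operatorname{tconv}(V)$ with $V=(-e_{B_1},\dots,-e_{B_n})$. Then the cornered hull of $P$ is the tropical standard simplex $\Delta^d=\operatorname{tconv}\{-e_1,\dots,-e_{d+1}\}$, and the $i$-th corner of $P$ is $c_i(V)=e_i$ (as a point of $\mathbb{T}^d$). Moreover $\operatorname{type}_V(e_i)=(T_1,\dots,T_{d+1})$ with $$T_j=\begin{cases}[n] & \text{if } j=i,\\ \{l\in[n]: j\in B_l \text{ and } i\notin B_l\} & \text{otherwise.}\end{cases}$$
   Context: Tropical arithmetic is min-plus: $a\oplus b=\min(a,b)$, $a\odot b=a+b$; $\mathbb{T}^d=\mathbb{R}^{d+1}/\mathbb{R}(1,\dots,1)$; $\operatorname{tconv}\{v_1,\dots,v_n\}=\{\bigoplus_l\lambda_l\odot v_l:\lambda_l\in\mathbb{R}\}$; $e_B=\sum_{i\in B}e_i$. For $m\in[d+1]$ let $\bar S_m=\{\xi\in\mathbb{T}^d:\xi_m=\min_i\xi_i\}$. The $m$-th corner of $\operatorname{tconv}(v_1,\dots,v_n)$ is $c_m(V)=\bigoplus_l(-v_{l,m})\odot v_l$, the $m$-th cornered halfspace is $c_m(V)+\bar S_m$, and the cornered hull is the intersection of all $d+1$ cornered halfspaces. For $V=(v_1,\dots,v_n)$ and $x\in\mathbb{T}^d$, $\operatorname{type}_V(x)=(T_1,\dots,T_{d+1})$ with $T_m=\{l\in[n]:v_l\in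 x+\bar S_m\}$. *)

theory Defs
  imports Complex_Main
begin

definition simple_graph :: "'a set \<Rightarrow> nat set \<Rightarrow> (nat \<Rightarrow> 'a set) \<Rightarrow> bool" where
  "simple_graph VV E ends \<longleftrightarrow> finite VV \<and> finite E \<and>
     (\<forall>e\<in>E. ends e \<subseteq> VV \<and> card (ends e) = 2) \<and> inj_on ends E"

definition adj :: "(nat \<Rightarrow> 'a set) \<Rightarrow> nat set \<Rightarrow> ('a \<times> 'a) set" where
  "adj ends F = {(u, v). \<exists>e\<in>F. ends e = {u, v}}"

definition connected_on :: "'a set \<Rightarrow> (nat \<Rightarrow> 'a set) \<Rightarrow> nat set \<Rightarrow> bool" where
  "connected_on VV ends F \<longleftrightarrow> VV \<noteq> {} \<and> (\<forall>u\<in>VV. \<forall>v\<in>VV. (u, v) \<in> (adj ends F)\<^sup>*)"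

definition has_cycle :: "(nat \<Rightarrow> 'a set) \<Rightarrow> nat set \<Rightarrow> bool" where
  "has_cycle ends F \<longleftrightarrow> (\<exists>vs. length vs \<ge> 3 \<and> distinct vs \<and>
     (\<forall>j < length vs. \<exists>e\<in>F. ends e = {vs ! j, vs ! ((j + 1) mod length vs)}))"

definition spanning_tree :: "'a set \<Rightarrow> (nat \<Rightarrow> 'a set) \<Rightarrow> nat set \<Rightarrow> nat set \<Rightarrow> bool" where
  "spanning_tree VV ends E B \<longleftrightarrow> B \<subseteq> E \<and> connected_on VV ends B \<and> \<not> has_cycle ends B"

definition bridgeless :: "'a set \<Rightarrow> (nat \<Rightarrow> 'a set) \<Rightarrow> nat set \<Rightarrow> bool" where
  "bridgeless VV ends E \<longleftrightarrow> (\<forall>e\<in>E. connected_on VV ends (E - {e}))"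

section \<open>Tropical (min-plus) notions in T^d, points represented by functions nat => real,
  coordinates indexed by {1..d+1}, considered modulo adding a constant\<close>

definition teq :: "nat \<Rightarrow> (nat \<Rightarrow> real) \<Rightarrow> (nat \<Rightarrow> real) \<Rightarrow> bool" where
  "teq d x y \<longleftrightarrow> (\<exists>c. \<forall>i\<in>{1..d+1}. x i = y i + c)"

definition tconv :: "nat \<Rightarrow> nat \<Rightarrow> (nat \<Rightarrow> nat \<Rightarrow> real) \<Rightarrow> (nat \<Rightarrow> real) set" where
  "tconv d n v = {x. \<exists>lam :: nat \<Rightarrow> real. \<forall>i\<in>{1..d+1}. x i = Min ((\<lambda>l. lam l + v l i) ` {1..n})}"

definition Sbar :: "nat \<Rightarrow> nat \<Rightarrow> (nat \<Rightarrow> real) set" where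
  "Sbar d m = {\<xi>. \<xi> m = Min (\<xi> ` {1..d+1})}"

definition sector :: "nat \<Rightarrow> (nat \<Rightarrow> real) \<Rightarrow> nat \<Rightarrow> (nat \<Rightarrow> real) set" where
  "sector d x m = {y. (\<lambda>i. y i - x i) \<in> Sbar d m}"

definition corner :: "nat \<Rightarrow> (nat \<Rightarrow> nat \<Rightarrow> real) \<Rightarrow> nat \<Rightarrow> (nat \<Rightarrow> real)" where
  "corner n v m = (\<lambda>i. Min ((\<lambda>l. (- v l m) + v l i) ` {1..n}))"

definition cornered_hull :: "nat \<Rightarrow> nat \<Rightarrow> (nat \<Rightarrow> nat \<Rightarrow> real) \<Rightarrow> (nat \<Rightarrow> real) set" where
  "cornered_hull d n v = (\<Inter>m\<in>{1..d+1}. sector d (corner n v m) m)"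

definition ttype :: "nat \<Rightarrow> nat \<Rightarrow> (nat \<Rightarrow> nat \<Rightarrow> real) \<Rightarrow> (nat \<Rightarrow> real) \<Rightarrow> nat \<Rightarrow> nat set" where
  "ttype d n v x m = {l\<in>{1..n}. v l \<in> sector d x m}"

definition indvec :: "nat set \<Rightarrow> nat \<Rightarrow> real" where
  "indvec B = (\<lambda>i. if i \<in> B then 1 else 0)"

definition trop_simplex :: "nat \<Rightarrow> (nat \<Rightarrow> real) set" where
  "trop_simplex d = tconv d (d+1) (\<lambda>l. - indvec {l})"

end

theory Submission
  imports Defs
begin

lemma Min_at_iff:
  fixes w :: "nat \<Rightarrow> real"
  assumes "finite A" "j \<in> A"
  shows "(w j = Min (w ` A)) \<longleftrightarrow> (\<forall>k\<in>A. w j \<le> w k)"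
proof
  assume "w j = Min (w ` A)" thus "\<forall>k\<in>A. w j \<le> w k" using assms by simp
next
  assume "\<forall>k\<in>A. w j \<le> w k" thus "w j = Min (w ` A)" using assms
    by (intro Min_eqI[symmetric]) auto
qed

lemma suc_mod: "(k::nat) < L \<Longrightarrow> (k+1) mod L = (if k+1 < L then k+1 else 0)"
proof (cases "k+1 < L")
  case False
  assume "k < L"
  hence "k+1 = L" using False by simp
  thus ?thesis by simp
qed simp

lemma adj_sym: "(u, v) \<in> adj ends F \<Longrightarrow> (v, u) \<in> adj ends F"
  unfolding adj_def by (auto simp: insert_commute)

lemma cycle_remove:
  assumes L: "length vs \<ge> 3" and dist: "distinct vs"
    and cyc: "\<forall>j < length vs. \<exists>e\<in>F. ends e = {vs ! j, vs ! ((j + 1) mod length vs)}"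
    and j: "j < length vs" and eF: "e \<in> F"
    and ee: "ends e = {vs ! j, vs ! ((j + 1) mod length vs)}"
  shows "adj ends F \<subseteq> (adj ends (F - {e}))\<^sup>*"
proof -
  define L where "L = length vs"
  have Lpos: "L > 0" using L L_def by auto
  have step: "(vs ! k, vs ! ((k+1) mod L)) \<in> adj ends (F - {e})"
    if kL: "k < L" and kj: "k \<noteq> j" for k
  proof -
    obtain e' where e': "e' \<in> F" "ends e' = {vs ! k, vs ! ((k + 1) mod L)}"
      using cyc kL kj L_def by auto
    have "e' \<noteq> e"
    proof
      assume "e' = e"
      hence eq: "{vs ! k, vs ! ((k + 1) mod L)} = {vs ! j, vs ! ((j + 1) mod L)}"
        using e' ee L_def by simp
      have k1: "(k+1) mod L < L" "(j+1) mod L < L" using Lpos by auto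
      have inj: "\<And>a b. a < L \<Longrightarrow> b < L \<Longrightarrow> vs!a = vs!b \<Longrightarrow> a = b"
        using dist L_def nth_eq_iff_index_eq by blast
      have "vs ! k = vs ! j \<or> vs ! k = vs ! ((j + 1) mod L)" using eq by blast
      hence kk: "k = (j+1) mod L" using inj kL kj j L_def k1 by blast
      have "vs ! ((k + 1) mod L) = vs ! j \<or> vs ! ((k + 1) mod L) = vs ! ((j + 1) mod L)"
        using eq by blast
      hence "(k + 1) mod L = j \<or> (k + 1) mod L = (j + 1) mod L"
        using inj j L_def k1 by blast
      thus False
      proof
        assume k2: "(k+1) mod L = j"
        show False
        proof (cases "j + 1 < L")
          case True
          hence "k = j+1" using kk by simp
          hence k3: "(j+2) mod L = j" using k2 by simp
          show False
          proof (cases "j+2 < L")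
            case True thus False using k3 by simp
          next
            case False
            hence "j+2 = L" using \<open>j+1<L\<close> by simp
            hence "j = 0" using k3 by simp
            thus False using \<open>j+2 = L\<close> L L_def by simp
          qed
        next
          case False
          hence "j + 1 = L" using j L_def by simp
          hence "k = 0" using kk by simp
          thus False using k2 L L_def \<open>j+1 = L\<close> by (auto simp: mod_if)
        qed
      next
        assume "(k + 1) mod L = (j + 1) mod L"
        thus False using kL kj j L_def L suc_mod[of k L] suc_mod[of j L] by (auto split: if_splits)
      qed
    qed
    thus ?thesis using e' unfolding adj_def by auto
  qed
  have path: "(vs ! ((j+1) mod L), vs ! ((j+1+t) mod L)) \<in> (adj ends (F - {e}))\<^sup>*"
    if "t \<le> L - 1" for t
    using that
  proof (induction t)
    case 0 thus ?case by simp
  next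
    case (Suc t)
    have k: "(j+1+t) mod L < L" using Lpos by auto
    have "(j+1+t) mod L \<noteq> j"
    proof
      assume "(j+1+t) mod L = j"
      show False
      proof (cases "j+1+t < L")
        case True thus False using \<open>(j+1+t) mod L = j\<close> by simp
      next
        case False
        hence "(j+1+t) mod L = (j+1+t-L) mod L" by (simp add: le_mod_geq)
        also have "\<dots> = j+1+t-L" using Suc.prems j L_def False by simp
        finally show False using \<open>(j+1+t) mod L = j\<close> Suc.prems False by simp
      qed
    qed
    hence "(vs ! ((j+1+t) mod L), vs ! (((j+1+t) mod L + 1) mod L)) \<in> adj ends (F - {e})"
      using step k by blast
    moreover have "((j+1+t) mod L + 1) mod L = (j+1+Suc t) mod L"
      by (simp add: mod_Suc_eq)
    ultimately show ?case using Suc by (auto intro: rtrancl_into_rtrancl)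
  qed
  have p: "(vs ! ((j+1) mod L), vs ! j) \<in> (adj ends (F - {e}))\<^sup>*"
  proof -
    have "(j+1+(L-1)) mod L = j" using j L_def Lpos by simp
    thus ?thesis using path[of "L-1"] by simp
  qed
  have sym: "(y, x) \<in> R\<^sup>*" if "\<And>a b. (a,b) \<in> R \<Longrightarrow> (b,a) \<in> R" "(x, y) \<in> R\<^sup>*"
    for x y and R :: "('b \<times> 'b) set"
    using that(2) proof (induction rule: rtrancl_induct)
    case base thus ?case by simp
  next
    case (step y z) thus ?case using that(1) by (meson converse_rtrancl_into_rtrancl)
  qed
  have p2: "(vs ! j, vs ! ((j+1) mod L)) \<in> (adj ends (F - {e}))\<^sup>*"
    using sym[of "adj ends (F - {e})", OF adj_sym p] by blast
  show ?thesis
  proof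
    fix x assume "x \<in> adj ends F"
    then obtain u v e' where x: "x = (u,v)" "e' \<in> F" "ends e' = {u,v}" unfolding adj_def by auto
    show "x \<in> (adj ends (F - {e}))\<^sup>*"
    proof (cases "e' = e")
      case False thus ?thesis using x unfolding adj_def by auto
    next
      case True
      hence "{u,v} = {vs ! j, vs ! ((j+1) mod L)}" using x ee L_def by simp
      hence "(u = vs ! j \<and> v = vs ! ((j+1) mod L)) \<or> (v = vs ! j \<and> u = vs ! ((j+1) mod L))"
        by (auto simp: doubleton_eq_iff)
      thus ?thesis using p p2 x by auto
    qed
  qed
qed

lemma tree_exists:
  assumes "finite F" "i \<in> F" "connected_on VV ends F"
  shows "\<exists>B\<subseteq>F. i \<in> B \<and> connected_on VV ends B \<and> \<not> has_cycle ends B"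
  using assms
proof (induction "card F" arbitrary: F rule: less_induct)
  case less
  show ?case
  proof (cases "has_cycle ends F")
    case False thus ?thesis using less.prems by blast
  next
    case True
    then obtain vs where L: "length vs \<ge> 3" and dist: "distinct vs"
      and cyc: "\<forall>j < length vs. \<exists>e\<in>F. ends e = {vs ! j, vs ! ((j + 1) mod length vs)}"
      unfolding has_cycle_def by blast
    have ne: "vs \<noteq> []" using L by auto
    have m1: "(0+1) mod length vs = 1" "(1+1) mod length vs = 2" using L by simp_all
    obtain e0 where e0: "e0 \<in> F" "ends e0 = {vs ! 0, vs ! 1}"
      using cyc[rule_format, of 0] L ne m1(1) by (auto simp del: One_nat_def)
    obtain e1 where e1: "e1 \<in> F" "ends e1 = {vs ! 1, vs ! 2}"
      using cyc[rule_format, of 1] L ne m1(2) by (auto simp del: One_nat_def)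
    have "vs ! 0 \<noteq> vs ! 2" "vs ! 0 \<noteq> vs ! 1"
      using nth_eq_iff_index_eq[OF dist, of 0 2] nth_eq_iff_index_eq[OF dist, of 0 1] L ne by auto
    hence "vs ! 0 \<notin> {vs ! 1, vs ! 2}" by blast
    hence "e0 \<noteq> e1" using e0 e1 by auto
    then obtain j e where j: "j < length vs" "e \<in> F" "e \<noteq> i"
      "ends e = {vs ! j, vs ! ((j + 1) mod length vs)}"
    proof (cases "e0 = i")
      case True
      hence "e1 \<noteq> i" using \<open>e0 \<noteq> e1\<close> by simp
      moreover have "1 < length vs" using L by linarith
      ultimately show ?thesis using that[of 1 e1] e1 m1 by simp
    next
      case False
      moreover have "0 < length vs" using L by linarith
      ultimately show ?thesis using that[of 0 e0] e0 m1 by simp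
    qed
    have sub: "adj ends F \<subseteq> (adj ends (F - {e}))\<^sup>*"
      by (rule cycle_remove[OF L dist cyc j(1) j(2) j(4)])
    have "(adj ends F)\<^sup>* \<subseteq> (adj ends (F - {e}))\<^sup>*"
      using rtrancl_mono[OF sub] by simp
    hence conn': "connected_on VV ends (F - {e})"
      using less.prems(3) unfolding connected_on_def by blast
    have "card (F - {e}) < card F" using j(2) less.prems(1) by (meson card_Diff1_less)
    moreover have "finite (F - {e})" using less.prems(1) by simp
    moreover have "i \<in> F - {e}" using less.prems(2) j(3) by simp
    ultimately have "\<exists>B\<subseteq>F - {e}. i \<in> B \<and> connected_on VV ends B \<and> \<not> has_cycle ends B"
      using less.hyps conn' by blast
    thus ?thesis by blast
  qed
qed

lemma hull_char:
  assumes cor: "\<forall>m\<in>{1..d+1}. \<forall>k\<in>{1..d+1}. corner n v m k = (if k = m then 0 else -1)"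
  shows "cornered_hull d n v = {y. \<forall>m\<in>{1..d+1}. \<forall>k\<in>{1..d+1}. y m \<le> y k + 1}"
proof -
  have "y \<in> sector d (corner n v m) m \<longleftrightarrow> (\<forall>k\<in>{1..d+1}. y m \<le> y k + 1)"
    if m: "m \<in> {1..d+1}" for y m
  proof -
    have "y \<in> sector d (corner n v m) m \<longleftrightarrow>
      (\<forall>k\<in>{1..d+1}. y m - corner n v m m \<le> y k - corner n v m k)"
      unfolding sector_def Sbar_def
      using Min_at_iff[of "{1..d+1}" m "\<lambda>i. y i - corner n v m i"] m by simp
    also have "\<dots> \<longleftrightarrow> (\<forall>k\<in>{1..d+1}. y m \<le> y k + 1)"
    proof
      assume h: "\<forall>k\<in>{1..d+1}. y m - corner n v m m \<le> y k - corner n v m k"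
      show "\<forall>k\<in>{1..d+1}. y m \<le> y k + 1"
      proof
        fix k assume k: "k \<in> {1..d+1}"
        show "y m \<le> y k + 1" using h[rule_format, OF k] cor m k
          by (cases "k = m") auto
      qed
    next
      assume h: "\<forall>k\<in>{1..d+1}. y m \<le> y k + 1"
      show "\<forall>k\<in>{1..d+1}. y m - corner n v m m \<le> y k - corner n v m k"
      proof
        fix k assume k: "k \<in> {1..d+1}"
        show "y m - corner n v m m \<le> y k - corner n v m k"
          using h[rule_format, OF k] cor m k by (cases "k = m") auto
      qed
    qed
    finally show ?thesis .
  qed
  thus ?thesis unfolding cornered_hull_def by auto
qed

lemma simplex_char:
  "trop_simplex d = {y. \<forall>m\<in>{1..d+1}. \<forall>k\<in>{1..d+1}. y m \<le> y k + 1}"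
proof (intro set_eqI iffI)
  fix x assume "x \<in> trop_simplex d"
  then obtain lam where lam: "\<forall>i\<in>{1..d+1}. x i = Min ((\<lambda>l. lam l + - indvec {l} i) ` {1..d+1})"
    unfolding trop_simplex_def tconv_def by auto
  define mu where "mu = Min (lam ` {1..d+1})"
  have up: "x i \<le> mu" if i: "i \<in> {1..d+1}" for i
  proof -
    have "mu \<in> lam ` {1..d+1}" unfolding mu_def by (rule Min_in) auto
    then obtain l where l: "l \<in> {1..d+1}" "mu = lam l" by auto
    have "x i \<le> lam l + - indvec {l} i" using lam i l by simp
    thus ?thesis using l by (simp add: indvec_def split: if_splits)
  qed
  have lo: "mu - 1 \<le> x i" if i: "i \<in> {1..d+1}" for i
  proof -
    have "\<forall>l\<in>{1..d+1}. mu - 1 \<le> lam l + - indvec {l} i"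
    proof
      fix l assume "l \<in> {1..d+1}"
      hence "mu \<le> lam l" unfolding mu_def by simp
      thus "mu - 1 \<le> lam l + - indvec {l} i" by (simp add: indvec_def)
    qed
    thus ?thesis using lam i by simp
  qed
  show "x \<in> {y. \<forall>m\<in>{1..d+1}. \<forall>k\<in>{1..d+1}. y m \<le> y k + 1}"
    using up lo by fastforce
next
  fix y :: "nat \<Rightarrow> real" assume y: "y \<in> {y. \<forall>m\<in>{1..d+1}. \<forall>k\<in>{1..d+1}. y m \<le> y k + 1}"
  have "\<forall>i\<in>{1..d+1}. y i = Min ((\<lambda>l. (y l + 1) + - indvec {l} i) ` {1..d+1})"
  proof
    fix i assume i: "i \<in> {1..d+1}"
    show "y i = Min ((\<lambda>l. (y l + 1) + - indvec {l} i) ` {1..d+1})"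
    proof (rule Min_eqI[symmetric])
      show "finite ((\<lambda>l. (y l + 1) + - indvec {l} i) ` {1..d+1})" by simp
    next
      fix z assume "z \<in> (\<lambda>l. (y l + 1) + - indvec {l} i) ` {1..d+1}"
      then obtain l where l: "l \<in> {1..d+1}" "z = (y l + 1) + - indvec {l} i" by auto
      thus "y i \<le> z" using y i by (auto simp: indvec_def)
    next
      show "y i \<in> (\<lambda>l. (y l + 1) + - indvec {l} i) ` {1..d+1}"
        using i by (auto simp: indvec_def intro!: image_eqI[where x=i])
    qed
  qed
  thus "y \<in> trop_simplex d" unfolding trop_simplex_def tconv_def
    by (intro CollectI exI[of _ "\<lambda>l. y l + 1"]) simp
qed

theorem mainTheorem6:
  fixes VV :: "'a set" and ends :: "nat \<Rightarrow> 'a set" and d n :: nat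
    and Bs :: "nat \<Rightarrow> nat set"
  assumes graph: "simple_graph VV {1..d+1} ends"
    and conn: "connected_on VV ends {1..d+1}"
    and nobridge: "bridgeless VV ends {1..d+1}"
    and bases_inj: "inj_on Bs {1..n}"
    and bases: "Bs ` {1..n} = {B. spanning_tree VV ends {1..d+1} B}"
  shows "cornered_hull d n (\<lambda>l. - indvec (Bs l)) = trop_simplex d
     \<and> (\<forall>i\<in>{1..d+1}. teq d (corner n (\<lambda>l. - indvec (Bs l)) i) (indvec {i})
        \<and> (\<forall>j\<in>{1..d+1}. ttype d n (\<lambda>l. - indvec (Bs l)) (indvec {i}) j =
              (if j = i then {1..n} else {l\<in>{1..n}. j \<in> Bs l \<and> i \<notin> Bs l})))"
proof -
  define E where "E = {1..d+1::nat}"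
  define v where "v = (\<lambda>l. - indvec (Bs l))"
  have E_fin: "finite E" unfolding E_def by simp
  have inBs: "B \<in> Bs ` {1..n}" if "spanning_tree VV ends E B" for B
    using that bases unfolding E_def by blast
  have tree: "\<exists>l\<in>{1..n}. i \<in> Bs l \<and> m \<notin> Bs l" if im: "i \<in> E" "m \<in> E" "i \<noteq> m" for i m
  proof -
    have c: "connected_on VV ends (E - {m})" using nobridge im(2) unfolding bridgeless_def E_def by blast
    have f: "finite (E - {m})" using E_fin by blast
    have ii: "i \<in> E - {m}" using im by blast
    obtain B where B: "B \<subseteq> E - {m}" "i \<in> B" "connected_on VV ends B" "\<not> has_cycle ends B"
      using tree_exists[OF f ii c] by blast
    hence "spanning_tree VV ends E B" unfolding spanning_tree_def by blast
    hence "B \<in> Bs ` {1..n}" by (rule inBs)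
    then obtain l where "l \<in> {1..n}" "B = Bs l" by blast
    thus ?thesis using B by blast
  qed
  have npos: "{1..n} \<noteq> {}"
  proof -
    have ii: "1 \<in> E" unfolding E_def by simp
    have c: "connected_on VV ends E" using conn unfolding E_def by simp
    obtain B where B: "B \<subseteq> E" "connected_on VV ends B" "\<not> has_cycle ends B"
      using tree_exists[OF E_fin ii c] by blast
    hence "spanning_tree VV ends E B" unfolding spanning_tree_def by blast
    hence "B \<in> Bs ` {1..n}" by (rule inBs)
    thus ?thesis by blast
  qed
  have cor: "\<forall>m\<in>{1..d+1}. \<forall>k\<in>{1..d+1}. corner n v m k = (if k = m then 0 else -1)"
  proof (intro ballI)
    fix m k assume m: "m \<in> {1..d+1}" and k: "k \<in> {1..d+1}"
    have eq: "corner n v m k = Min ((\<lambda>l. indvec (Bs l) m - indvec (Bs l) k) ` {1..n})"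
      unfolding corner_def v_def by simp
    show "corner n v m k = (if k = m then 0 else -1)"
    proof (cases "k = m")
      case True
      have "(\<lambda>l. indvec (Bs l) m - indvec (Bs l) k) ` {1..n} = {0}" using True npos by auto
      thus ?thesis using eq True by simp
    next
      case False
      obtain l where l: "l \<in> {1..n}" "k \<in> Bs l" "m \<notin> Bs l" using tree[of k m] m k False unfolding E_def by blast
      have "Min ((\<lambda>l. indvec (Bs l) m - indvec (Bs l) k) ` {1..n}) = -1"
      proof (rule Min_eqI)
        show "finite ((\<lambda>l. indvec (Bs l) m - indvec (Bs l) k) ` {1..n})" by simp
      next
        fix y assume "y \<in> (\<lambda>l. indvec (Bs l) m - indvec (Bs l) k) ` {1..n}"
        thus "-1 \<le> y" by (auto simp: indvec_def)
      next
        show "-1 \<in> (\<lambda>l. indvec (Bs l) m - indvec (Bs l) k) ` {1..n}"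
          using l by (auto simp: indvec_def intro!: image_eqI[where x=l])
      qed
      thus ?thesis using eq False by simp
    qed
  qed
  have part1: "cornered_hull d n v = trop_simplex d"
    using hull_char[OF cor] simplex_char by simp
  have part2: "teq d (corner n v i) (indvec {i})" if i: "i \<in> {1..d+1}" for i
    unfolding teq_def using cor i by (intro exI[where x="-1"]) (auto simp: indvec_def)
  have part3: "ttype d n v (indvec {i}) j =
              (if j = i then {1..n} else {l\<in>{1..n}. j \<in> Bs l \<and> i \<notin> Bs l})"
    if i: "i \<in> {1..d+1}" and j: "j \<in> {1..d+1}" for i j
  proof -
    have mem: "v l \<in> sector d (indvec {i}) j \<longleftrightarrow>
       (\<forall>k\<in>{1..d+1}. - indvec (Bs l) j - indvec {i} j \<le> - indvec (Bs l) k - indvec {i} k)" for l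
      unfolding sector_def Sbar_def v_def
      using Min_at_iff[of "{1..d+1}" j "\<lambda>k. - indvec (Bs l) k - indvec {i} k"] j by simp
    show ?thesis
    proof (cases "j = i")
      case True
      have "v l \<in> sector d (indvec {i}) j" for l
        unfolding mem using True by (auto simp: indvec_def)
      thus ?thesis using True unfolding ttype_def by auto
    next
      case False
      have "v l \<in> sector d (indvec {i}) j \<longleftrightarrow> j \<in> Bs l \<and> i \<notin> Bs l" for l
      proof
        assume "v l \<in> sector d (indvec {i}) j"
        hence "- indvec (Bs l) j - indvec {i} j \<le> - indvec (Bs l) i - indvec {i} i"
          unfolding mem using i by blast
        thus "j \<in> Bs l \<and> i \<notin> Bs l" using False by (auto simp: indvec_def split: if_splits)
      next
        assume "j \<in> Bs l \<and> i \<notin> Bs l"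
        thus "v l \<in> sector d (indvec {i}) j" unfolding mem using False
          by (auto simp: indvec_def)
      qed
      thus ?thesis using False unfolding ttype_def by auto
    qed
  qed
  show ?thesis unfolding v_def[symmetric]
  proof (intro conjI ballI)
    show "cornered_hull d n v = trop_simplex d" by (rule part1)
  next
    fix i assume "i \<in> {1..d+1}" thus "teq d (corner n v i) (indvec {i})" by (rule part2)
  next
    fix i j assume "i \<in> {1..d+1}" "j \<in> {1..d+1}"
    thus "ttype d n v (indvec {i}) j =
              (if j = i then {1..n} else {l\<in>{1..n}. j \<in> Bs l \<and> i \<notin> Bs l})" by (rule part3)
  qed
qed

end
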